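(* Let $f\in L([-\pi,\pi]^2)$ and let $\{a^{ij}_{mn}\}_{m,n=1}^{\infty}$, $i,j\in\{0,1\}$, be its Fourier coefficients with respect to the system $\{\sin^{(i)}(mx)\sin^{(j)}(ny)\}$, where $\sin^{(0)}t=\sin t$, $\sin^{(1)}t=\cos t$. Then for any $p\in(1,\infty)$ and $q\in[1,\infty]$, with $1/p+1/p'=1$, $$\sum_{i,j=0}^{1}\sum_{m,n=1}^{\infty}\Big(\sup_{k\ge m,\,l\ge n}\frac{1}{kl}\Big|\sum_{s=1}^{k}\sum_{t=1}^{l}a^{ij}_{st}\Big|\Big)^q(mn)^{\frac{q}{p'}-1}\lesssim\|f\|^q_{L^q_{w(p,q)}},$$ with the implied constant independent of $f$ (for $q=\infty$ the left-hand side is understood as $\sum_{i,j}\sup_{m,n}(mn)^{1/p'}\sup_{k\ge m,l\ge n}\frac1{kl}|\sum_{s\le k,t\le l}a^{ij}_{st}|$ and the right-hand side as $\|f\|_{L^\infty_{w(p,\infty)}}$).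
   Context: For $0<p,q<\infty$, $\|f\|_{L^q_{w(p,q)}}:=\big(\int_{-\pi}^{\pi}\int_{-\pi}^{\pi}|ts|^{\frac qp-1}|f(t,s)|^q\,dt\,ds\big)^{1/q}$; for $q=\infty$, $\|f\|_{L^\infty_{w(p,\infty)}}:=\operatorname{ess\,sup}_{(t,s)\in[-\pi,\pi]^2}|ts|^{1/p}|f(t,s)|$. *)

theory Defs
  imports "HOL-Analysis.Analysis" "HOL-Probability.Essential_Supremum"
begin

definition sq :: "(real \<times> real) set" where
  "sq = {-pi..pi} \<times> {-pi..pi}"

definition sinx :: "nat \<Rightarrow> real \<Rightarrow> real" where
  "sinx i t = (if i = 0 then sin t else cos t)"

definition fcoef :: "((real \<times> real) \<Rightarrow> real) \<Rightarrow> nat \<Rightarrow> nat \<Rightarrow> nat \<Rightarrow> nat \<Rightarrow> real" where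
  "fcoef f i j m n = (1 / pi\<^sup>2) *
     (LINT z : sq | lebesgue. f z * sinx i (real m * fst z) * sinx j (real n * snd z))"

definition maxavg :: "((real \<times> real) \<Rightarrow> real) \<Rightarrow> nat \<Rightarrow> nat \<Rightarrow> nat \<Rightarrow> nat \<Rightarrow> ennreal" where
  "maxavg f i j m n = (SUP (k, l) \<in> {(k, l). m \<le> k \<and> n \<le> l}.
     ennreal (\<bar>\<Sum>s=1..k. \<Sum>t=1..l. fcoef f i j s t\<bar> / (real k * real l)))"

definition enn_powr :: "ennreal \<Rightarrow> real \<Rightarrow> ennreal" where
  "enn_powr x q = (if x = \<infinity> then \<infinity> else ennreal (enn2real x powr q))"

definition wnorm_q :: "real \<Rightarrow> real \<Rightarrow> ((real \<times> real) \<Rightarrow> real) \<Rightarrow> ennreal" where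
  "wnorm_q p q f = (\<integral>\<^sup>+ z. indicator sq z *
     ennreal (\<bar>fst z * snd z\<bar> powr (q / p - 1) * \<bar>f z\<bar> powr q) \<partial>lebesgue)"

definition wnorm_inf :: "real \<Rightarrow> ((real \<times> real) \<Rightarrow> real) \<Rightarrow> ennreal" where
  "wnorm_inf p f = esssup (restrict_space lebesgue sq)
     (\<lambda>z. ennreal (\<bar>fst z * snd z\<bar> powr (1 / p) * \<bar>f z\<bar>))"

end

theory Submission
  imports Defs
begin

definition phi :: "nat \<Rightarrow> real \<Rightarrow> real" where
  "phi k x = (if x = 0 then 1 else min 1 (4 / (real k * \<bar>x\<bar>)))"

lemma sin_half_lower:
  assumes "0 \<le> t" "t \<le> pi / 2"
  shows "t / 2 \<le> sin t"
proof (cases "t \<le> pi / 3")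
  case True
  show ?thesis
  proof (cases "t = 0")
    case False
    then have "0 < t" using assms by simp
    from MVT2[OF this, of sin cos] obtain z where z: "0 < z" "z < t" "sin t - sin 0 = (t - 0) * cos z"
      by (auto intro!: derivative_eq_intros)
    have "cos (pi/3) \<le> cos z" using z True by (intro cos_monotone_0_pi_le) auto
    then have "1/2 \<le> cos z" by (simp add: cos_60)
    then show ?thesis using z \<open>0 < t\<close> by (simp add: mult_left_mono)
  qed simp
next
  case False
  have "sin (pi/3) \<le> sin t" using False assms by (intro sin_monotone_2pi_le) auto
  moreover have "sin (pi/3) = sqrt 3 / 2" by (simp add: sin_60)
  moreover have "pi / 4 \<le> sqrt 3 / 2"
  proof -
    have "pi \<le> 3.2" using pi_approx by simp
    moreover have "1.6 \<le> sqrt 3" by (rule real_le_rsqrt) (simp add: power2_eq_square)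
    ultimately show ?thesis by simp
  qed
  ultimately show ?thesis using assms by simp
qed

lemma sum_sin_tele:
  "2 * sin (x/2) * (\<Sum>s=1..k. sin (real s * x)) = cos (x/2) - cos ((real k + 1/2) * x)"
proof (induction k)
  case (Suc k)
  have e1: "x/2 - real (Suc k) * x = -((real k + 1/2) * x)" "x/2 + real (Suc k) * x = (real (Suc k) + 1/2) * x"
    by (simp_all add: algebra_simps)
  have "2 * sin (x/2) * sin (real (Suc k) * x) = cos ((real k + 1/2) * x) - cos ((real (Suc k) + 1/2) * x)"
    using sin_times_sin[of "x/2" "real (Suc k) * x"] unfolding e1 by simp
  then show ?case using Suc by (simp add: distrib_left)
qed simp

lemma sum_cos_tele:
  "2 * sin (x/2) * (\<Sum>s=1..k. cos (real s * x)) = sin ((real k + 1/2) * x) - sin (x/2)"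
proof (induction k)
  case (Suc k)
  have e1: "x/2 - real (Suc k) * x = -((real k + 1/2) * x)" "x/2 + real (Suc k) * x = (real (Suc k) + 1/2) * x"
    by (simp_all add: algebra_simps)
  have "2 * sin (x/2) * cos (real (Suc k) * x) = sin ((real (Suc k) + 1/2) * x) - sin ((real k + 1/2) * x)"
    using sin_times_cos[of "x/2" "real (Suc k) * x"] unfolding e1 by simp
  then show ?case using Suc by (simp add: distrib_left)
qed simp

lemma sum_sinx_bound:
  assumes "x \<noteq> 0" "\<bar>x\<bar> \<le> pi"
  shows "\<bar>\<Sum>s=1..k. sinx i (real s * x)\<bar> \<le> 4 / \<bar>x\<bar>"
proof -
  have hl: "\<bar>x\<bar> / 4 \<le> \<bar>sin (x/2)\<bar>"
  proof (cases "0 \<le> x")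
    case True
    then show ?thesis using sin_half_lower[of "x/2"] assms by simp
  next
    case False
    then show ?thesis using sin_half_lower[of "-x/2"] assms by simp
  qed
  have pos: "0 < \<bar>x\<bar> / 4" using assms by simp
  have "\<bar>2 * sin (x/2) * (\<Sum>s=1..k. sinx i (real s * x))\<bar> \<le> 2"
  proof (cases "i = 0")
    case True
    then show ?thesis unfolding sinx_def using sum_sin_tele[of x k]
      by (simp del: of_nat_Suc) (smt (verit) cos_le_one cos_ge_minus_one)
  next
    case False
    then show ?thesis unfolding sinx_def using sum_cos_tele[of x k]
      by (simp del: of_nat_Suc) (smt (verit) sin_le_one sin_ge_minus_one)
  qed
  then have "2 * \<bar>sin (x/2)\<bar> * \<bar>\<Sum>s=1..k. sinx i (real s * x)\<bar> \<le> 2" by (simp add: abs_mult)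
  then have "2 * (\<bar>x\<bar> / 4) * \<bar>\<Sum>s=1..k. sinx i (real s * x)\<bar> \<le> 2"
    using hl by (smt (verit) abs_ge_zero mult_right_mono pos)
  then show ?thesis using assms by (simp add: field_simps)
qed

lemma kernel_bound:
  assumes "1 \<le> k" "\<bar>x\<bar> \<le> pi"
  shows "\<bar>\<Sum>s=1..k. sinx i (real s * x)\<bar> / real k \<le> phi k x"
proof -
  have le1: "\<bar>\<Sum>s=1..k. sinx i (real s * x)\<bar> / real k \<le> 1"
  proof -
    have "\<bar>\<Sum>s=1..k. sinx i (real s * x)\<bar> \<le> (\<Sum>s=1..k. 1)"
      by (rule order_trans[OF sum_abs]) (intro sum_mono, auto simp: sinx_def abs_sin_le_one abs_cos_le_one)
    then show ?thesis using assms by simp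
  qed
  show ?thesis
  proof (cases "x = 0")
    case True then show ?thesis using le1 by (simp add: phi_def)
  next
    case False
    have "\<bar>\<Sum>s=1..k. sinx i (real s * x)\<bar> / real k \<le> (4 / \<bar>x\<bar>) / real k"
      using sum_sinx_bound[OF False assms(2)] assms by (intro divide_right_mono) auto
    then show ?thesis using le1 False by (simp add: phi_def mult.commute)
  qed
qed


lemma meas_sinx [measurable]: "g \<in> borel_measurable M \<Longrightarrow> (\<lambda>x. sinx i (g x)) \<in> borel_measurable M"
  unfolding sinx_def by (cases "i = 0") simp_all

lemma cont_sinx [continuous_intros]: "continuous_on (S :: 'a::metric_space set) g \<Longrightarrow> continuous_on S (\<lambda>x. sinx i (g x))"
  unfolding sinx_def by (cases "i = 0") (auto intro!: continuous_on_sin continuous_on_cos)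

lemma meas_phi [measurable]: "phi k \<in> borel_measurable borel"
  unfolding phi_def by measurable

lemma leb_meas: "g \<in> borel_measurable borel \<Longrightarrow> (g :: real \<times> real \<Rightarrow> real) \<in> borel_measurable lebesgue"
  using measurable_completion measurable_lborel2 by blast

lemma fs_integrable:
  assumes "set_integrable lebesgue sq (f :: real \<times> real \<Rightarrow> real)"
  shows "integrable lebesgue (\<lambda>z. indicator sq z * f z)"
  using assms unfolding set_integrable_def by (simp add: mult.commute)

lemma integrable_fs_mult:
  assumes "integrable lebesgue (F :: real \<times> real \<Rightarrow> real)" "c \<in> borel_measurable borel" "\<And>z. \<bar>c z\<bar> \<le> 1"
  shows "integrable lebesgue (\<lambda>z. F z * c z)"
proof (rule Bochner_Integration.integrable_bound[OF assms(1)])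
  show "(\<lambda>z. F z * c z) \<in> borel_measurable lebesgue"
    using borel_measurable_integrable[OF assms(1)] leb_meas[OF assms(2)] by measurable
  show "AE z in lebesgue. norm (F z * c z) \<le> norm (F z)"
    using assms(3) by (auto simp: abs_mult intro!: mult_left_le)
qed

lemma abs_sinx_le: "\<bar>sinx i t\<bar> \<le> 1"
  by (simp add: sinx_def)

lemma phi_le1: "0 \<le> phi k x \<and> phi k x \<le> 1"
  by (simp add: phi_def)

lemma phi_mono: "1 \<le> m \<Longrightarrow> m \<le> k \<Longrightarrow> phi k x \<le> phi m x"
proof -
  assume a: "1 \<le> m" "m \<le> k"
  show ?thesis
  proof (cases "x = 0")
    case False
    have "4 / (real k * \<bar>x\<bar>) \<le> 4 / (real m * \<bar>x\<bar>)"
      using a False by (intro divide_left_mono mult_right_mono) auto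
    then show ?thesis using False by (simp add: phi_def)
  qed (simp add: phi_def)
qed

lemma fcoef_eq:
  "fcoef f i j s t = (1/pi\<^sup>2) * integral\<^sup>L lebesgue
     (\<lambda>z. (indicator sq z * f z) * (sinx i (real s * fst z) * sinx j (real t * snd z)))"
  unfolding fcoef_def set_lebesgue_integral_def by (simp add: mult_ac)

lemma csum_meas [measurable]:
  "(\<lambda>z::real\<times>real. (\<Sum>s=1..k. sinx i (real s * fst z)) * (\<Sum>t=1..l. sinx j (real t * snd z)))
     \<in> borel_measurable borel"
  by (intro borel_measurable_continuous_onI continuous_intros)

lemma sum_fcoef_eq:
  assumes "set_integrable lebesgue sq (f :: real \<times> real \<Rightarrow> real)"
  shows "(\<Sum>s=1..k. \<Sum>t=1..l. fcoef f i j s t) = (1/pi\<^sup>2) * integral\<^sup>L lebesgue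
     (\<lambda>z. (indicator sq z * f z) * ((\<Sum>s=1..k. sinx i (real s * fst z)) * (\<Sum>t=1..l. sinx j (real t * snd z))))"
proof -
  note I = fs_integrable[OF assms]
  have int: "integrable lebesgue (\<lambda>z. (indicator sq z * f z) * (sinx i (real s * fst z) * sinx j (real t * snd z)))" for s t
    by (rule integrable_fs_mult[OF I]) (auto simp: abs_mult intro!: mult_le_one abs_sinx_le borel_measurable_continuous_onI continuous_intros)
  have "integral\<^sup>L lebesgue (\<lambda>z. \<Sum>s=1..k. \<Sum>t=1..l.
     (indicator sq z * f z) * (sinx i (real s * fst z) * sinx j (real t * snd z))) =
     (\<Sum>s=1..k. integral\<^sup>L lebesgue (\<lambda>z. \<Sum>t=1..l.
     (indicator sq z * f z) * (sinx i (real s * fst z) * sinx j (real t * snd z))))"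
    by (subst Bochner_Integration.integral_sum) (auto intro!: Bochner_Integration.integrable_sum int)
  also have "\<dots> = (\<Sum>s=1..k. \<Sum>t=1..l. integral\<^sup>L lebesgue
     (\<lambda>z. (indicator sq z * f z) * (sinx i (real s * fst z) * sinx j (real t * snd z))))"
    by (subst Bochner_Integration.integral_sum) (auto intro: int)
  finally have e: "integral\<^sup>L lebesgue (\<lambda>z. \<Sum>s=1..k. \<Sum>t=1..l.
     (indicator sq z * f z) * (sinx i (real s * fst z) * sinx j (real t * snd z))) =
     (\<Sum>s=1..k. \<Sum>t=1..l. integral\<^sup>L lebesgue
     (\<lambda>z. (indicator sq z * f z) * (sinx i (real s * fst z) * sinx j (real t * snd z))))" .
  have e2: "(\<lambda>z. \<Sum>s=1..k. \<Sum>t=1..l.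
     (indicator sq z * f z) * (sinx i (real s * fst z) * sinx j (real t * snd z))) =
     (\<lambda>z. (indicator sq z * f z) * ((\<Sum>s=1..k. sinx i (real s * fst z)) * (\<Sum>t=1..l. sinx j (real t * snd z))))"
    by (simp only: sum_product, simp only: sum_distrib_left)
  show ?thesis using e unfolding e2 by (simp add: fcoef_eq sum_distrib_left)
qed


definition fsq :: "((real \<times> real) \<Rightarrow> real) \<Rightarrow> (real \<times> real) \<Rightarrow> real" where
  "fsq f z = indicator sq z * f z"

definition Bv :: "((real \<times> real) \<Rightarrow> real) \<Rightarrow> nat \<Rightarrow> nat \<Rightarrow> real" where
  "Bv f m n = (1/pi\<^sup>2) * integral\<^sup>L lebesgue (\<lambda>z. \<bar>fsq f z\<bar> * (phi m (fst z) * phi n (snd z)))"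

lemma phiphi_meas: "(\<lambda>z::real\<times>real. phi m (fst z) * phi n (snd z)) \<in> borel_measurable borel"
proof -
  have "(\<lambda>z::real\<times>real. phi m (fst z) * phi n (snd z)) \<in> borel_measurable (borel \<Otimes>\<^sub>M borel)"
    by measurable
  then show ?thesis by (simp add: borel_prod)
qed

lemma fsq_integrable: "set_integrable lebesgue sq f \<Longrightarrow> integrable lebesgue (fsq f)"
  unfolding fsq_def using fs_integrable by (metis (no_types, lifting) ext) 

lemma phi_abs: "\<bar>phi m a\<bar> \<le> 1"
  using phi_le1[of m a] by simp

lemma Bv_integrable:
  assumes "set_integrable lebesgue sq (f :: real \<times> real \<Rightarrow> real)"
  shows "integrable lebesgue (\<lambda>z. \<bar>fsq f z\<bar> * (phi m (fst z) * phi n (snd z)))"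
  by (rule integrable_fs_mult[OF integrable_abs[OF fsq_integrable[OF assms]] phiphi_meas])
     (auto simp: abs_mult intro!: mult_le_one phi_abs)

lemma avg_bound:
  assumes "set_integrable lebesgue sq (f :: real \<times> real \<Rightarrow> real)" "1 \<le> k" "1 \<le> l"
  shows "\<bar>\<Sum>s=1..k. \<Sum>t=1..l. fcoef f i j s t\<bar> / (real k * real l) \<le> Bv f k l"
proof -
  define Sk where "Sk x = (\<Sum>s=1..k. sinx i (real s * x))" for x
  define Sl where "Sl y = (\<Sum>t=1..l. sinx j (real t * y))" for y
  have bk: "\<bar>Sk x\<bar> \<le> real k" for x
    unfolding Sk_def by (rule order_trans[OF sum_abs]) (rule order_trans[OF sum_mono[OF abs_sinx_le]], simp)
  have bl: "\<bar>Sl x\<bar> \<le> real l" for x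
    unfolding Sl_def by (rule order_trans[OF sum_abs]) (rule order_trans[OF sum_mono[OF abs_sinx_le]], simp)
  have int1: "integrable lebesgue (\<lambda>z. fsq f z * (Sk (fst z) * Sl (snd z) / (real k * real l)))"
    using fs_integrable[OF assms(1)] unfolding fsq_def
  proof (rule integrable_fs_mult)
    show "(\<lambda>z. Sk (fst z) * Sl (snd z) / (real k * real l)) \<in> borel_measurable borel"
      unfolding Sk_def Sl_def by (intro borel_measurable_continuous_onI continuous_intros) (use assms in auto)
    fix z :: "real \<times> real"
    have "\<bar>Sk (fst z) * Sl (snd z)\<bar> \<le> real k * real l"
      unfolding abs_mult by (intro mult_mono bk bl) auto
    then show "\<bar>Sk (fst z) * Sl (snd z) / (real k * real l)\<bar> \<le> 1"
      using assms by (simp add: abs_mult)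
  qed
  have "\<bar>\<Sum>s=1..k. \<Sum>t=1..l. fcoef f i j s t\<bar> / (real k * real l)
     = (1/pi\<^sup>2) * \<bar>integral\<^sup>L lebesgue (\<lambda>z. fsq f z * (Sk (fst z) * Sl (snd z))) / (real k * real l)\<bar>"
    unfolding sum_fcoef_eq[OF assms(1)] Sk_def Sl_def fsq_def by (simp add: abs_mult)
  also have "\<dots> = (1/pi\<^sup>2) * \<bar>integral\<^sup>L lebesgue (\<lambda>z. fsq f z * (Sk (fst z) * Sl (snd z) / (real k * real l)))\<bar>"
    by (simp add: times_divide_eq_right)
  also have "\<dots> \<le> Bv f k l"
    unfolding Bv_def
  proof (intro mult_left_mono integral_abs_bound_integral int1 Bv_integrable assms(1))
    fix z :: "real \<times> real"
    show "\<bar>fsq f z * (Sk (fst z) * Sl (snd z) / (real k * real l))\<bar> \<le> \<bar>fsq f z\<bar> * (phi k (fst z) * phi l (snd z))"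
    proof (cases "z \<in> sq")
      case True
      then have "\<bar>fst z\<bar> \<le> pi" "\<bar>snd z\<bar> \<le> pi" by (auto simp: sq_def mem_Times_iff)
      then have "\<bar>Sk (fst z)\<bar> / real k \<le> phi k (fst z)" "\<bar>Sl (snd z)\<bar> / real l \<le> phi l (snd z)"
        unfolding Sk_def Sl_def using kernel_bound[OF assms(2)] kernel_bound[OF assms(3)] by auto
      then have "\<bar>Sk (fst z) * Sl (snd z) / (real k * real l)\<bar> \<le> phi k (fst z) * phi l (snd z)"
        by (simp add: abs_mult) (metis (no_types, lifting) abs_ge_zero divide_nonneg_nonneg mult_mono of_nat_0_le_iff phi_le1 times_divide_times_eq)
      then show ?thesis unfolding abs_mult times_divide_eq_right[symmetric] by (intro mult_left_mono) auto
    qed (simp add: fsq_def)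
  qed simp
  finally show ?thesis .
qed


lemma young_pt:
  fixes t l q :: real
  assumes "1 < q" "0 \<le> t" "0 < l"
  shows "t \<le> l powr (1 - q) * t powr q / q + l * (1 - 1/q)"
proof (cases "t = 0")
  case True then show ?thesis using assms by simp
next
  case False
  then have t: "0 < t" using assms by simp
  have "(l powr (1 - q) * t powr q) powr (1/q) * l powr (1 - 1/q) \<le> (1/q) * (l powr (1 - q) * t powr q) + (1 - 1/q) * l"
    using assms t by (intro Youngs_inequality_0) auto
  moreover have "(l powr (1 - q) * t powr q) powr (1/q) * l powr (1 - 1/q) = t"
  proof -
    have "(l powr (1 - q) * t powr q) powr (1/q) = l powr ((1 - q)/q) * t"
      using assms t by (simp add: powr_mult powr_powr)
    moreover have "l powr ((1 - q)/q) * l powr (1 - 1/q) = 1"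
    proof -
      have "(1 - q)/q + (1 - 1/q) = 0" using assms by (simp add: field_simps)
      then show ?thesis using assms by (simp flip: powr_add)
    qed
    ultimately show ?thesis by (metis mult.assoc mult.commute mult_1)
  qed
  ultimately show ?thesis by (simp add: mult_ac)
qed

lemma aux0: "0 \<le> (u::real) \<Longrightarrow> 0 \<le> v \<Longrightarrow> u powr q * v \<le> 0 \<Longrightarrow> u * v \<le> 0"
  by (smt (verit) mult_eq_0_iff mult_nonneg_nonneg powr_eq_0_iff powr_ge_zero)

lemma holder_nn:
  fixes u v :: "'a \<Rightarrow> real" and q H W :: real
  assumes q: "1 \<le> q"
    and mu: "u \<in> borel_measurable M" and mv: "v \<in> borel_measurable M"
    and nu: "\<And>x. 0 \<le> u x" and nv: "\<And>x. 0 \<le> v x"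
    and H: "(\<integral>\<^sup>+x. ennreal (u x * v x) \<partial>M) = ennreal H" "0 \<le> H"
    and W: "(\<integral>\<^sup>+x. ennreal (v x) \<partial>M) = ennreal W" "0 \<le> W"
  shows "ennreal (H powr q) \<le> (\<integral>\<^sup>+x. ennreal (u x powr q * v x) \<partial>M) * ennreal (W powr (q - 1))"
proof (cases "H = 0")
  case True then show ?thesis by simp
next
  case False
  then have Hpos: "0 < H" using H by simp
  have Wpos: "0 < W"
  proof (rule ccontr)
    assume "\<not> 0 < W"
    then have "W = 0" using W by simp
    then have "AE x in M. ennreal (v x) = 0" using W mv by (subst nn_integral_0_iff_AE[symmetric]) auto
    then have "AE x in M. ennreal (u x * v x) = 0" by eventually_elim (use nv in simp)
    then have "(\<integral>\<^sup>+x. ennreal (u x * v x) \<partial>M) = 0" using mu mv by (subst nn_integral_0_iff_AE) auto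
    then show False using H Hpos by simp
  qed
  define A where "A = (\<integral>\<^sup>+x. ennreal (u x powr q * v x) \<partial>M)"
  show ?thesis
  proof (cases "q = 1")
    case True
    have "A = ennreal H" unfolding A_def True H(1)[symmetric]
      using nu by (intro nn_integral_cong) (simp add: powr_one)
    moreover have "ennreal (W powr (q - 1)) = 1" using True Wpos by simp
    moreover have "H powr q = H" using True H(2) by (simp add: powr_one)
    ultimately show ?thesis unfolding A_def[symmetric] by simp
  next
    case False
    then have q1: "1 < q" using q by simp
    show ?thesis
    proof (cases "A = \<infinity>")
      case True
      then show ?thesis using Wpos by (simp add: A_def[symmetric] ennreal_mult_top)
    next
      case False
      then obtain a where a: "A = ennreal a" "0 \<le> a" by (cases A) auto
      have apos: "0 < a"
      proof (rule ccontr)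
        assume "\<not> 0 < a"
        then have "a = 0" using a by simp
        then have "AE x in M. ennreal (u x powr q * v x) = 0" using a mu mv unfolding A_def
          by (subst nn_integral_0_iff_AE[symmetric]) auto
        then have "AE x in M. ennreal (u x * v x) = 0"
        proof eventually_elim
          fix x assume "ennreal (u x powr q * v x) = 0"
          then have "u x powr q * v x \<le> 0" by (simp add: ennreal_eq_0_iff)
          then have "u x * v x \<le> 0" by (rule aux0[OF nu nv])
          then show "ennreal (u x * v x) = 0" by (simp add: ennreal_eq_0_iff)
        qed
        then have "(\<integral>\<^sup>+x. ennreal (u x * v x) \<partial>M) = 0" using mu mv by (subst nn_integral_0_iff_AE) auto
        then show False using H Hpos by simp
      qed
      define l where "l = (a / W) powr (1/q)"
      have lpos: "0 < l" unfolding l_def using apos Wpos by simp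
      define c1 where "c1 = l powr (1 - q) / q"
      define c2 where "c2 = l * (1 - 1/q)"
      have c1: "0 \<le> c1" and c2: "0 \<le> c2" using lpos q1 by (auto simp: c1_def c2_def)
      have pt: "u x * v x \<le> c1 * (u x powr q * v x) + c2 * v x" for x
      proof -
        have "u x \<le> l powr (1 - q) * u x powr q / q + l * (1 - 1/q)"
          by (rule young_pt[OF q1 nu lpos])
        then have "u x * v x \<le> (l powr (1 - q) * u x powr q / q + l * (1 - 1/q)) * v x"
          by (rule mult_right_mono[OF _ nv])
        then show ?thesis by (simp add: c1_def c2_def algebra_simps)
      qed
      have "ennreal H \<le> (\<integral>\<^sup>+x. ennreal (c1 * (u x powr q * v x)) + ennreal (c2 * v x) \<partial>M)"
        unfolding H(1)[symmetric]
        by (intro nn_integral_mono) (metis c1 c2 ennreal_leI ennreal_plus mult_nonneg_nonneg nu nv powr_ge_zero pt)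
      also have "\<dots> = ennreal c1 * A + ennreal c2 * ennreal W"
        unfolding A_def W(1)[symmetric] using mu mv c1 c2 nu nv
        by (subst nn_integral_add) (auto simp: ennreal_mult nn_integral_cmult)
      also have "\<dots> = ennreal (c1 * a + c2 * W)"
        using a c1 c2 W by (simp add: ennreal_mult ennreal_plus)
      finally have HB: "H \<le> c1 * a + c2 * W"
        using c1 c2 a W by (subst (asm) ennreal_le_iff) auto
      have key: "c1 * a + c2 * W = a powr (1/q) * W powr (1 - 1/q)"
      proof -
        have e1: "c1 * a = a powr (1/q) * W powr (1 - 1/q) / q"
        proof -
          have "l powr (1 - q) = (a / W) powr ((1 - q)/q)" unfolding l_def using apos Wpos
            by (simp add: powr_powr)
          also have "\<dots> = a powr ((1 - q)/q) / W powr ((1 - q)/q)"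
            using apos Wpos by (simp add: powr_divide)
          also have "\<dots> = a powr ((1 - q)/q) * W powr ((q - 1)/q)"
          proof -
            have "(q - 1)/q = - ((1 - q)/q)" by (metis minus_diff_eq minus_divide_left)
            then have "W powr ((q - 1)/q) = W powr (- ((1 - q)/q))" by simp
            then show ?thesis by (simp add: powr_minus divide_inverse)
          qed
          finally have "c1 * a = a powr ((1 - q)/q) * a * W powr ((q - 1)/q) / q"
            unfolding c1_def by (simp add: mult_ac)
          also have "a powr ((1 - q)/q) * a = a powr (1/q)"
          proof -
            have "a powr ((1 - q)/q) * a powr 1 = a powr ((1-q)/q + 1)" by (simp add: powr_add)
            also have "(1-q)/q + 1 = 1/q" using q1 by (simp add: field_simps)
            finally show ?thesis using apos by simp
          qed
          also have "(q - 1)/q = 1 - 1/q" using q1 by (simp add: field_simps)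
          finally show ?thesis .
        qed
        have e2: "c2 * W = a powr (1/q) * W powr (1 - 1/q) * (1 - 1/q)"
        proof -
          have "l * W = a powr (1/q) * W powr (1 - 1/q)"
          proof -
            have "l = a powr (1/q) / W powr (1/q)" unfolding l_def using apos Wpos by (simp add: powr_divide)
            moreover have "W = W powr (1/q) * W powr (1 - 1/q)" using Wpos by (simp flip: powr_add)
            ultimately have "l * W = a powr (1/q) / W powr (1/q) * (W powr (1/q) * W powr (1 - 1/q))"
              by simp
            also have "\<dots> = a powr (1/q) * W powr (1 - 1/q)"
              using Wpos by simp
            finally show ?thesis .
          qed
          then show ?thesis unfolding c2_def by (simp add: mult_ac)
        qed
        show ?thesis unfolding e1 e2 using q1 by (simp add: field_simps)
      qed
      have "H powr q \<le> (a powr (1/q) * W powr (1 - 1/q)) powr q"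
        using HB key Hpos q1 by (intro powr_mono2) auto
      also have "\<dots> = a * W powr (q - 1)"
      proof -
        have "(1 - 1/q) * q = q - 1" using q1 by (simp add: field_simps)
        then show ?thesis using apos Wpos q1 by (simp add: powr_mult powr_powr)
      qed
      finally show ?thesis
        using a Wpos by (simp add: A_def[symmetric] ennreal_mult[symmetric] ennreal_leI)
    qed
  qed
qed


lemma nn_int_powr_0:
  assumes "-1 < c"
  shows "(\<integral>\<^sup>+u. ennreal (indicator {0..4} u * u powr c) \<partial>lborel) = ennreal (4 powr (c+1)/(c+1))"
proof (rule nn_integral_has_integral_lborel)
  show "(\<lambda>u. indicator {0..4} u * u powr c :: real) \<in> borel_measurable borel" by measurable
  show "0 \<le> indicator {0..4} u * u powr c" for u :: real by simp
  have "((\<lambda>u. u powr c) has_integral (4 powr (c+1)/(c+1))) {0..4}"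
    using has_integral_powr_from_0[OF assms, of 4] by simp
  then show "((\<lambda>u. indicator {0..4} u * u powr c) has_integral (4 powr (c+1)/(c+1))) UNIV"
  proof -
    have eq: "(\<lambda>u. indicator {0..4} u * u powr c) = (\<lambda>x. if x \<in> {0..4} then x powr c else 0)"
      by (auto simp: indicator_def)
    show ?thesis unfolding eq has_integral_restrict_UNIV by fact
  qed
qed

lemma nn_int_powr_inf:
  assumes "e < -1"
  shows "(\<integral>\<^sup>+u. ennreal (indicator {4..} u * u powr e) \<partial>lborel) = ennreal (- (4 powr (e+1)) / (e+1))"
proof (rule nn_integral_has_integral_lborel)
  show "(\<lambda>u. indicator {4..} u * u powr e :: real) \<in> borel_measurable borel" by measurable
  show "0 \<le> indicator {4..} u * u powr e" for u :: real by simp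
  have "((\<lambda>u. u powr e) has_integral (- (4 powr (e+1)) / (e+1))) {4..}"
    using has_integral_powr_to_inf[OF assms, of 4] by simp
  then show "((\<lambda>u. indicator {4..} u * u powr e) has_integral (- (4 powr (e+1)) / (e+1))) UNIV"
  proof -
    have eq: "(\<lambda>u. indicator {4..} u * u powr e) = (\<lambda>x. if x \<in> {4..} then x powr e else 0)"
      by (auto simp: indicator_def)
    show ?thesis unfolding eq has_integral_restrict_UNIV by fact
  qed
qed

definition psi :: "real \<Rightarrow> real" where "psi u = min 1 (4 / u)"

lemma psi_meas [measurable]: "psi \<in> borel_measurable borel"
  unfolding psi_def by measurable

lemma J_finite:
  assumes "-1 < c" "c < 0"
  shows "(\<integral>\<^sup>+u. ennreal (indicator {0<..} u * (u powr c * psi u)) \<partial>lborel) < \<infinity>"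
proof -
  have "(\<integral>\<^sup>+u. ennreal (indicator {0<..} u * (u powr c * psi u)) \<partial>lborel)
     \<le> (\<integral>\<^sup>+u. ennreal (indicator {0..4} u * u powr c) + ennreal (4 * (indicator {4..} u * u powr (c - 1))) \<partial>lborel)"
  proof (rule nn_integral_mono)
    fix u :: real
    show "ennreal (indicator {0<..} u * (u powr c * psi u))
       \<le> ennreal (indicator {0..4} u * u powr c) + ennreal (4 * (indicator {4..} u * u powr (c - 1)))"
    proof (cases "0 < u")
      case True
      show ?thesis
      proof (cases "u \<le> 4")
        case True
        have "u powr c * psi u \<le> u powr c" unfolding psi_def by (simp add: mult_left_le)
        then have "ennreal (indicator {0<..} u * (u powr c * psi u)) \<le> ennreal (indicator {0..4} u * u powr c)"
          using True \<open>0 < u\<close> by (intro ennreal_leI) (simp add: indicator_def)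
        then show ?thesis by (rule order_trans) (metis add.right_neutral add_left_mono zero_le)
      next
        case False
        then have "psi u = 4 / u" unfolding psi_def by simp
        then have "u powr c * psi u = 4 * u powr (c - 1)" using \<open>0<u\<close> by (simp add: powr_diff)
        then show ?thesis using False \<open>0 < u\<close> by (simp add: indicator_def)
      qed
    qed simp
  qed
  also have "\<dots> = ennreal (4 powr (c+1)/(c+1)) + 4 * ennreal (- (4 powr (c - 1 + 1)) / (c - 1 + 1))"
  proof -
    have a: "(\<integral>\<^sup>+u. ennreal (indicator {0..4} u * u powr c) + ennreal (4 * (indicator {4..} u * u powr (c - 1))) \<partial>lborel)
      = (\<integral>\<^sup>+u. ennreal (indicator {0..4} u * u powr c) \<partial>lborel) + (\<integral>\<^sup>+u. ennreal (4 * (indicator {4..} u * u powr (c - 1))) \<partial>lborel)"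
      by (rule nn_integral_add) auto
    have b: "(\<integral>\<^sup>+u. ennreal (4 * (indicator {4..} u * u powr (c - 1))) \<partial>lborel)
      = 4 * (\<integral>\<^sup>+u. ennreal (indicator {4..} u * u powr (c - 1)) \<partial>lborel)"
      by (subst nn_integral_cmult[symmetric]) (auto simp: ennreal_mult)
    show ?thesis unfolding a b nn_int_powr_0[OF assms(1)] using nn_int_powr_inf[of "c - 1"] assms by simp
  qed
  also have "\<dots> < \<infinity>" by (simp add: ennreal_mult_less_top)
  finally show ?thesis .
qed

definition Jc :: "real \<Rightarrow> ennreal" where
  "Jc c = (\<integral>\<^sup>+u. ennreal (indicator {0<..} u * (u powr c * psi u)) \<partial>lborel)"

lemma scale_J:
  assumes "0 < k"
  shows "(\<integral>\<^sup>+x. ennreal (indicator {0<..} x * (x powr c * psi (k * x))) \<partial>lborel) = ennreal (k powr (-c-1)) * Jc c"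
proof -
  have "Jc c = ennreal \<bar>k\<bar> * (\<integral>\<^sup>+x. ennreal (indicator {0<..} (0 + k * x) * ((0 + k * x) powr c * psi (0 + k * x))) \<partial>lborel)"
    unfolding Jc_def by (rule nn_integral_real_affine) (use assms in auto)
  also have "(\<integral>\<^sup>+x. ennreal (indicator {0<..} (0 + k * x) * ((0 + k * x) powr c * psi (0 + k * x))) \<partial>lborel)
     = (\<integral>\<^sup>+x. ennreal (k powr c) * ennreal (indicator {0<..} x * (x powr c * psi (k * x))) \<partial>lborel)"
  proof (rule nn_integral_cong)
    fix x :: real
    show "ennreal (indicator {0<..} (0 + k * x) * ((0 + k * x) powr c * psi (0 + k * x))) =
        ennreal (k powr c) * ennreal (indicator {0<..} x * (x powr c * psi (k * x)))"
    proof (cases "0 < x")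
      case True
      then show ?thesis using assms
        by (simp add: indicator_def powr_mult ennreal_mult' mult_ac)
    next
      case False
      then have "\<not> 0 < k * x" using assms by (simp add: zero_less_mult_iff)
      then show ?thesis using False by (simp add: indicator_def)
    qed
  qed
  also have "\<dots> = ennreal (k powr c) * (\<integral>\<^sup>+x. ennreal (indicator {0<..} x * (x powr c * psi (k * x))) \<partial>lborel)"
    by (rule nn_integral_cmult) measurable
  finally have "Jc c = ennreal (k powr (c + 1)) * (\<integral>\<^sup>+x. ennreal (indicator {0<..} x * (x powr c * psi (k * x))) \<partial>lborel)"
    using assms by (simp add: ennreal_mult' mult_ac powr_add)
  then have "ennreal (k powr (-c-1)) * Jc c = ennreal (k powr (-c-1) * k powr (c + 1)) * (\<integral>\<^sup>+x. ennreal (indicator {0<..} x * (x powr c * psi (k * x))) \<partial>lborel)"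
    by (simp add: ennreal_mult mult.assoc)
  also have "k powr (-c-1) * k powr (c + 1) = 1" using assms by (simp flip: powr_add)
  finally show ?thesis by simp
qed


lemma psi_nonneg: "0 \<le> u \<Longrightarrow> 0 \<le> psi u"
  by (simp add: psi_def)

lemma phi_psi: "x \<noteq> 0 \<Longrightarrow> phi m x = psi (real m * \<bar>x\<bar>)"
  by (simp add: phi_def psi_def)

lemma L1:
  assumes "0 < b" "b < 1" "1 \<le> m"
  shows "(\<integral>\<^sup>+x. ennreal (\<bar>x\<bar> powr (-b) * phi m x) \<partial>lborel) \<le> 2 * (ennreal (real m powr (b - 1)) * Jc (-b))"
proof -
  define g where "g x = ennreal (indicator {0<..} x * (x powr (-b) * psi (real m * x)))" for x
  have gm: "g \<in> borel_measurable borel" unfolding g_def by measurable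
  have "(\<integral>\<^sup>+x. ennreal (\<bar>x\<bar> powr (-b) * phi m x) \<partial>lborel) \<le> (\<integral>\<^sup>+x. g x + g (0 + (-1) * x) \<partial>lborel)"
  proof (rule nn_integral_mono)
    fix x :: real
    show "ennreal (\<bar>x\<bar> powr (-b) * phi m x) \<le> g x + g (0 + (-1) * x)"
    proof (cases "0 < x")
      case True
      then show ?thesis by (simp add: g_def phi_psi)
    next
      case False
      show ?thesis
      proof (cases "x = 0")
        case False
        then have "x < 0" using \<open>\<not> 0 < x\<close> by simp
        then show ?thesis by (simp add: g_def phi_psi)
      qed simp
    qed
  qed
  also have "\<dots> = (\<integral>\<^sup>+x. g x \<partial>lborel) + (\<integral>\<^sup>+x. g (0 + (-1) * x) \<partial>lborel)"
    using gm by (intro nn_integral_add) auto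
  also have "(\<integral>\<^sup>+x. g (0 + (-1) * x) \<partial>lborel) = (\<integral>\<^sup>+x. g x \<partial>lborel)"
    using nn_integral_real_affine[OF gm, of "-1" 0] by simp
  also have "(\<integral>\<^sup>+x. g x \<partial>lborel) = ennreal (real m powr (b - 1)) * Jc (-b)"
    unfolding g_def using scale_J[of "real m" "-b"] assms by simp
  finally show ?thesis by (simp add: mult_2)
qed

lemma psi_anti: "0 < u \<Longrightarrow> u \<le> v \<Longrightarrow> psi v \<le> psi u"
proof -
  assume "0 < u" "u \<le> v"
  then have "4 / v \<le> 4 / u" by (intro divide_left_mono) auto
  then show ?thesis unfolding psi_def by (rule min.mono[OF order_refl])
qed

lemma L2:
  assumes "-1 < e" "e < 0" "0 < x"
  shows "(\<Sum>m. ennreal (real (Suc m) powr e * psi (x * real (Suc m)))) \<le> ennreal (x powr (-e-1)) * Jc e"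
proof -
  define G where "G t = t powr e * psi (x * t)" for t
  have Gm: "G \<in> borel_measurable borel" unfolding G_def by measurable
  define A where "A m = {real m<..real (Suc m)}" for m
  have trm: "ennreal (G (real (Suc m))) \<le> (\<integral>\<^sup>+t. indicator (A m) t * ennreal (G t) \<partial>lborel)" for m
  proof -
    have "ennreal (G (real (Suc m))) = (\<integral>\<^sup>+t. ennreal (G (real (Suc m))) * indicator (A m) t \<partial>lborel)"
      by (simp add: nn_integral_cmult_indicator A_def)
    also have "\<dots> \<le> (\<integral>\<^sup>+t. indicator (A m) t * ennreal (G t) \<partial>lborel)"
    proof (rule nn_integral_mono)
      fix t :: real
      show "ennreal (G (real (Suc m))) * indicator (A m) t \<le> indicator (A m) t * ennreal (G t)"
      proof (cases "t \<in> A m")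
        case True
        then have t: "0 < t" "t \<le> real (Suc m)" unfolding A_def by auto
        have "real (Suc m) powr e \<le> t powr e" using t assms by (intro powr_mono2') auto
        moreover have "psi (x * real (Suc m)) \<le> psi (x * t)"
          using t assms by (intro psi_anti) (auto intro: mult_left_mono)
        ultimately have "G (real (Suc m)) \<le> G t" unfolding G_def
          using t assms by (intro mult_mono) (auto intro: psi_nonneg)
        then show ?thesis using True by (simp add: ennreal_leI)
      qed simp
    qed
    finally show ?thesis .
  qed
  have "(\<Sum>m. ennreal (real (Suc m) powr e * psi (x * real (Suc m)))) \<le> (\<Sum>m. \<integral>\<^sup>+t. indicator (A m) t * ennreal (G t) \<partial>lborel)"
    using trm unfolding G_def by (intro suminf_le) auto
  also have "\<dots> = (\<integral>\<^sup>+t. (\<Sum>m. indicator (A m) t * ennreal (G t)) \<partial>lborel)"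
    by (rule nn_integral_suminf[symmetric]) (use Gm in \<open>auto simp: A_def\<close>)
  also have "\<dots> = (\<integral>\<^sup>+t. indicator {0<..} t * ennreal (G t) \<partial>lborel)"
  proof (rule nn_integral_cong)
    fix t :: real
    have dj: "disjoint_family A" unfolding disjoint_family_on_def A_def
      by (auto simp: less_le_not_le)
    have un: "(\<Union>i. A i) = {0<..}"
    proof
      show "(\<Union>i. A i) \<subseteq> {0<..}" unfolding A_def by auto
      show "{0<..} \<subseteq> (\<Union>i. A i)"
      proof
        fix t :: real assume "t \<in> {0<..}"
        then have "0 < t" by simp
        define n where "n = nat (\<lceil>t\<rceil> - 1)"
        have "real n < t" "t \<le> real (Suc n)" using \<open>0 < t\<close> unfolding n_def
          by (auto simp: of_nat_nat) linarith+
        then show "t \<in> (\<Union>i. A i)" unfolding A_def by auto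
      qed
    qed
    show "(\<Sum>m. indicator (A m) t * ennreal (G t)) = indicator {0<..} t * ennreal (G t)"
      using suminf_indicator[OF dj, of t] un by (simp add: ennreal_suminf_multc)
  qed
  also have "\<dots> = ennreal (x powr (-e-1)) * Jc e"
  proof -
    have "(\<integral>\<^sup>+t. indicator {0<..} t * ennreal (G t) \<partial>lborel) = (\<integral>\<^sup>+t. ennreal (indicator {0<..} t * (t powr e * psi (x * t))) \<partial>lborel)"
      unfolding G_def by (intro nn_integral_cong) (simp add: indicator_def)
    then show ?thesis using scale_J[OF assms(3), of e] by simp
  qed
  finally show ?thesis .
qed


lemma prod_int:
  fixes F G :: "real \<Rightarrow> ennreal"
  assumes [measurable]: "F \<in> borel_measurable borel" "G \<in> borel_measurable borel"
  shows "(\<integral>\<^sup>+z. F (fst z) * G (snd z) \<partial>lebesgue) = (\<integral>\<^sup>+x. F x \<partial>lborel) * (\<integral>\<^sup>+y. G y \<partial>lborel)"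
proof -
  have "(\<integral>\<^sup>+z. F (fst z) * G (snd z) \<partial>lebesgue) = (\<integral>\<^sup>+z. F (fst z) * G (snd z) \<partial>(lborel \<Otimes>\<^sub>M lborel))"
    by (simp add: nn_integral_completion lborel_prod)
  also have "\<dots> = (\<integral>\<^sup>+x. \<integral>\<^sup>+y. F x * G y \<partial>lborel \<partial>lborel)"
    by (subst lborel.nn_integral_fst[symmetric]) auto
  also have "\<dots> = (\<integral>\<^sup>+x. F x * (\<integral>\<^sup>+y. G y \<partial>lborel) \<partial>lborel)"
    by (subst nn_integral_cmult) auto
  also have "\<dots> = (\<integral>\<^sup>+x. F x \<partial>lborel) * (\<integral>\<^sup>+y. G y \<partial>lborel)"
    by (subst nn_integral_multc) auto
  finally show ?thesis .
qed

lemma AE_axes: "AE z in (lebesgue :: (real \<times> real) measure). fst z \<noteq> 0 \<and> snd z \<noteq> 0"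
proof -
  have n1: "{0::real} \<times> UNIV \<in> null_sets (lborel \<Otimes>\<^sub>M lborel)"
    by (auto simp: null_sets_def lborel.emeasure_pair_measure_Times)
  have n2: "UNIV \<times> {0::real} \<in> null_sets (lborel \<Otimes>\<^sub>M lborel)"
    by (auto simp: null_sets_def lborel.emeasure_pair_measure_Times)
  have "AE z in (lborel \<Otimes>\<^sub>M lborel :: (real \<times> real) measure). fst z \<noteq> 0 \<and> snd z \<noteq> 0"
    by (rule AE_I'[OF null_sets.Un[OF n1 n2]]) auto
  then have "AE z in (lborel :: (real \<times> real) measure). fst z \<noteq> 0 \<and> snd z \<noteq> 0"
    by (simp only: lborel_prod)
  then show ?thesis by (rule AE_completion)
qed

definition Kb :: "real \<Rightarrow> real" where "Kb b = (2 * enn2real (Jc (-b)))\<^sup>2"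

lemma Jc_fin: "-1 < c \<Longrightarrow> c < 0 \<Longrightarrow> Jc c = ennreal (enn2real (Jc c))"
  using J_finite[of c] unfolding Jc_def[symmetric] by (simp add: ennreal_enn2real_if)

lemma W_bound:
  assumes "0 < b" "b < 1" "1 \<le> m" "1 \<le> n"
  shows "(\<integral>\<^sup>+z. ennreal (indicator sq z * (\<bar>fst z * snd z\<bar> powr (-b) * (phi m (fst z) * phi n (snd z)))) \<partial>lebesgue)
     \<le> ennreal (Kb b * (real m * real n) powr (b - 1))"
proof -
  define F where "F k x = ennreal (\<bar>x\<bar> powr (-b) * phi k x)" for k x
  have Fm [measurable]: "F k \<in> borel_measurable borel" for k unfolding F_def by measurable
  have "(\<integral>\<^sup>+z. ennreal (indicator sq z * (\<bar>fst z * snd z\<bar> powr (-b) * (phi m (fst z) * phi n (snd z)))) \<partial>lebesgue)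
     \<le> (\<integral>\<^sup>+z. F m (fst z) * F n (snd z) \<partial>lebesgue)"
  proof (rule nn_integral_mono)
    fix z :: "real \<times> real"
    have "indicator sq z * (\<bar>fst z * snd z\<bar> powr (-b) * (phi m (fst z) * phi n (snd z)))
        \<le> (\<bar>fst z\<bar> powr (-b) * phi m (fst z)) * (\<bar>snd z\<bar> powr (-b) * phi n (snd z))"
      using phi_le1[of m "fst z"] phi_le1[of n "snd z"]
      by (auto simp: indicator_def abs_mult powr_mult mult_ac)
    then show "ennreal (indicator sq z * (\<bar>fst z * snd z\<bar> powr (-b) * (phi m (fst z) * phi n (snd z))))
        \<le> F m (fst z) * F n (snd z)"
      unfolding F_def using phi_le1[of m "fst z"] phi_le1[of n "snd z"]
      by (simp add: ennreal_mult[symmetric] ennreal_leI)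
  qed
  also have "\<dots> = (\<integral>\<^sup>+x. F m x \<partial>lborel) * (\<integral>\<^sup>+y. F n y \<partial>lborel)"
    by (rule prod_int) measurable
  also have "\<dots> \<le> (2 * (ennreal (real m powr (b - 1)) * Jc (-b))) * (2 * (ennreal (real n powr (b - 1)) * Jc (-b)))"
    unfolding F_def using assms by (intro mult_mono L1) auto
  also have "\<dots> = ennreal (Kb b * (real m * real n) powr (b - 1))"
  proof -
    define j where "j = enn2real (Jc (-b))"
    have J: "Jc (-b) = ennreal j" unfolding j_def using assms by (intro Jc_fin) auto
    have j0: "0 \<le> j" unfolding j_def by simp
    have r: "Kb b * (real m * real n) powr (b - 1) = (2 * (real m powr (b - 1) * j)) * (2 * (real n powr (b - 1) * j))"
      unfolding Kb_def j_def[symmetric] by (simp add: powr_mult power2_eq_square mult_ac)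
    show ?thesis unfolding J r using j0 by (simp add: ennreal_mult mult_ac)
  qed
  finally show ?thesis .
qed


lemma S_bound:
  assumes "-1 < e" "e < 0" "x \<noteq> 0" "y \<noteq> 0"
  shows "(\<Sum>m. \<Sum>n. ennreal ((real (Suc m) * real (Suc n)) powr e * (phi (Suc m) x * phi (Suc n) y)))
     \<le> ennreal ((enn2real (Jc e))\<^sup>2 * (\<bar>x\<bar> powr (-e-1) * \<bar>y\<bar> powr (-e-1)))"
proof -
  define a where "a m = ennreal (real (Suc m) powr e * phi (Suc m) x)" for m
  define c where "c n = ennreal (real (Suc n) powr e * phi (Suc n) y)" for n
  define j where "j = enn2real (Jc e)"
  have J: "Jc e = ennreal j" unfolding j_def using assms by (intro Jc_fin) auto
  have j0: "0 \<le> j" unfolding j_def by simp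
  have eq: "ennreal ((real (Suc m) * real (Suc n)) powr e * (phi (Suc m) x * phi (Suc n) y)) = a m * c n" for m n
    unfolding a_def c_def using phi_le1[of "Suc m" x] phi_le1[of "Suc n" y]
    by (simp add: powr_mult ennreal_mult[symmetric] mult_ac)
  have sa: "(\<Sum>m. a m) \<le> ennreal (\<bar>x\<bar> powr (-e-1)) * ennreal j"
    using L2[of e "\<bar>x\<bar>"] assms unfolding a_def J by (simp add: phi_psi mult.commute)
  have sc: "(\<Sum>n. c n) \<le> ennreal (\<bar>y\<bar> powr (-e-1)) * ennreal j"
    using L2[of e "\<bar>y\<bar>"] assms unfolding c_def J by (simp add: phi_psi mult.commute)
  have "(\<Sum>m. \<Sum>n. ennreal ((real (Suc m) * real (Suc n)) powr e * (phi (Suc m) x * phi (Suc n) y)))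
      = (\<Sum>m. a m) * (\<Sum>n. c n)"
    unfolding eq by (simp add: ennreal_suminf_cmult ennreal_suminf_multc)
  also have "\<dots> \<le> (ennreal (\<bar>x\<bar> powr (-e-1)) * ennreal j) * (ennreal (\<bar>y\<bar> powr (-e-1)) * ennreal j)"
    by (intro mult_mono sa sc) auto
  also have "\<dots> = ennreal (j\<^sup>2 * (\<bar>x\<bar> powr (-e-1) * \<bar>y\<bar> powr (-e-1)))"
    using j0 by (simp add: ennreal_mult[symmetric] power2_eq_square mult_ac)
  finally show ?thesis by (simp add: j_def)
qed

lemma Bv_nonneg: "0 \<le> Bv f m n"
  unfolding Bv_def using phi_le1 by (auto intro!: integral_nonneg_AE mult_nonneg_nonneg)

lemma Bv_anti:
  assumes "set_integrable lebesgue sq f" "1 \<le> m" "m \<le> k" "1 \<le> n" "n \<le> l"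
  shows "Bv f k l \<le> Bv f m n"
  unfolding Bv_def
proof (rule mult_left_mono[OF integral_mono[OF Bv_integrable[OF assms(1)] Bv_integrable[OF assms(1)]]])
  fix z :: "real \<times> real"
  show "\<bar>fsq f z\<bar> * (phi k (fst z) * phi l (snd z)) \<le> \<bar>fsq f z\<bar> * (phi m (fst z) * phi n (snd z))"
    using assms phi_le1 by (intro mult_left_mono mult_mono phi_mono) auto
qed simp

lemma maxavg_le:
  assumes "set_integrable lebesgue sq f" "1 \<le> m" "1 \<le> n"
  shows "maxavg f i j m n \<le> ennreal (Bv f m n)"
  unfolding maxavg_def
proof (rule SUP_least, clarify)
  fix k l assume kl: "m \<le> k" "n \<le> l"
  have "\<bar>\<Sum>s=1..k. \<Sum>t=1..l. fcoef f i j s t\<bar> / (real k * real l) \<le> Bv f k l"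
    using assms kl by (intro avg_bound) auto
  also have "\<dots> \<le> Bv f m n" using assms kl by (intro Bv_anti) auto
  finally show "ennreal (\<bar>\<Sum>s=1..k. \<Sum>t=1..l. fcoef f i j s t\<bar> / (real k * real l)) \<le> ennreal (Bv f m n)"
    by (rule ennreal_leI)
qed

lemma enn_powr_le:
  assumes "X \<le> ennreal B" "0 \<le> B" "0 \<le> q"
  shows "enn_powr X q \<le> ennreal (B powr q)"
proof -
  have "X \<noteq> \<infinity>" using assms by (auto simp: top_unique)
  moreover have "enn2real X \<le> B" using assms using enn2real_mono[OF assms(1)] by simp
  ultimately show ?thesis unfolding enn_powr_def using assms by (auto intro!: ennreal_leI powr_mono2)
qed


lemma leb_meas2: "g \<in> borel_measurable (borel \<Otimes>\<^sub>M borel) \<Longrightarrow> (g :: real \<times> real \<Rightarrow> real) \<in> borel_measurable lebesgue"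
  by (rule leb_meas) (simp add: borel_prod)

lemma sq_sets [measurable]: "sq \<in> sets (borel \<Otimes>\<^sub>M borel)"
  unfolding sq_def by (rule pair_measureI) auto

lemma fsq_meas: "set_integrable lebesgue sq f \<Longrightarrow> fsq f \<in> borel_measurable lebesgue"
  using fsq_integrable borel_measurable_integrable by blast

lemma wmeas: "(\<lambda>z::real\<times>real. indicator sq z * (\<bar>fst z * snd z\<bar> powr r * (phi m (fst z) * phi n (snd z)))) \<in> borel_measurable lebesgue"
  by (rule leb_meas2) measurable

lemma pmeas: "(\<lambda>z::real\<times>real. \<bar>fst z * snd z\<bar> powr r) \<in> borel_measurable lebesgue"
  by (rule leb_meas2) measurable

lemma Kb_nonneg: "0 \<le> Kb b" unfolding Kb_def by simp

lemma term_bound: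
  assumes f: "set_integrable lebesgue sq f" and q: "1 \<le> q" and b: "0 < b" "b < 1" and MN: "1 \<le> M" "1 \<le> N"
  shows "ennreal (Bv f M N powr q) \<le> ennreal ((1/pi\<^sup>2) powr q * Kb b powr (q-1)) *
    ((\<integral>\<^sup>+z. ennreal ((\<bar>fsq f z\<bar> * \<bar>fst z * snd z\<bar> powr b) powr q *
        (indicator sq z * (\<bar>fst z * snd z\<bar> powr (-b) * (phi M (fst z) * phi N (snd z))))) \<partial>lebesgue)
     * ennreal ((real M * real N) powr ((b-1)*(q-1))))"
proof -
  define U where "U z = \<bar>fsq f z\<bar> * \<bar>fst z * snd z\<bar> powr b" for z
  define V where "V z = indicator sq z * (\<bar>fst z * snd z\<bar> powr (-b) * (phi M (fst z) * phi N (snd z)))" for z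
  define H where "H = integral\<^sup>L lebesgue (\<lambda>z. \<bar>fsq f z\<bar> * (phi M (fst z) * phi N (snd z)))"
  define A where "A = (\<integral>\<^sup>+z. ennreal (U z powr q * V z) \<partial>lebesgue)"
  define W where "W = enn2real (\<integral>\<^sup>+z. ennreal (V z) \<partial>lebesgue)"
  have H0: "0 \<le> H" unfolding H_def using phi_le1 by (auto intro!: integral_nonneg_AE mult_nonneg_nonneg)
  have Um: "U \<in> borel_measurable lebesgue" unfolding U_def using fsq_meas[OF f] pmeas by measurable
  have Vm: "V \<in> borel_measurable lebesgue" unfolding V_def by (rule wmeas)
  have U0: "0 \<le> U z" for z unfolding U_def by simp
  have V0: "0 \<le> V z" for z unfolding V_def using phi_le1 by simp
  have HU: "(\<integral>\<^sup>+z. ennreal (U z * V z) \<partial>lebesgue) = ennreal H"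
  proof -
    have "(\<integral>\<^sup>+z. ennreal (U z * V z) \<partial>lebesgue) = (\<integral>\<^sup>+z. ennreal (\<bar>fsq f z\<bar> * (phi M (fst z) * phi N (snd z))) \<partial>lebesgue)"
    proof (rule nn_integral_cong_AE)
      show "AE z in lebesgue. ennreal (U z * V z) = ennreal (\<bar>fsq f z\<bar> * (phi M (fst z) * phi N (snd z)))"
        using AE_axes
      proof eventually_elim
        fix z :: "real \<times> real" assume z: "fst z \<noteq> 0 \<and> snd z \<noteq> 0"
        then have "\<bar>fst z * snd z\<bar> powr b * \<bar>fst z * snd z\<bar> powr (-b) = 1"
          by (simp flip: powr_add)
        moreover have "indicator sq z * fsq f z = fsq f z" unfolding fsq_def by (simp add: indicator_def)
        ultimately have "U z * V z = \<bar>fsq f z\<bar> * (phi M (fst z) * phi N (snd z))"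
          unfolding U_def V_def fsq_def by (auto simp: indicator_def)
        then show "ennreal (U z * V z) = ennreal (\<bar>fsq f z\<bar> * (phi M (fst z) * phi N (snd z)))" by simp
      qed
    qed
    also have "\<dots> = ennreal H" unfolding H_def
      using Bv_integrable[OF f] phi_le1 by (intro nn_integral_eq_integral) (auto intro!: mult_nonneg_nonneg)
    finally show ?thesis .
  qed
  have Wfin: "(\<integral>\<^sup>+z. ennreal (V z) \<partial>lebesgue) \<le> ennreal (Kb b * (real M * real N) powr (b - 1))"
    unfolding V_def using W_bound[OF b MN] by simp
  then have WV: "(\<integral>\<^sup>+z. ennreal (V z) \<partial>lebesgue) = ennreal W" unfolding W_def
    by (metis enn2real_nonneg ennreal_enn2real_if ennreal_less_top linorder_not_less top.extremum_uniqueI)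
  have W0: "0 \<le> W" unfolding W_def by simp
  have WK: "W \<le> Kb b * (real M * real N) powr (b - 1)"
    using Wfin unfolding WV using Kb_nonneg by (subst (asm) ennreal_le_iff) auto
  have hol: "ennreal (H powr q) \<le> A * ennreal (W powr (q - 1))"
    unfolding A_def by (rule holder_nn[OF q Um Vm U0 V0 HU H0 WV W0])
  have "W powr (q - 1) \<le> (Kb b * (real M * real N) powr (b - 1)) powr (q - 1)"
    using WK W0 q by (intro powr_mono2) auto
  also have "\<dots> = Kb b powr (q-1) * (real M * real N) powr ((b-1)*(q-1))"
    using Kb_nonneg MN by (simp add: powr_mult powr_powr)
  finally have Wq: "W powr (q - 1) \<le> Kb b powr (q-1) * (real M * real N) powr ((b-1)*(q-1))" .
  have "Bv f M N powr q = (1/pi\<^sup>2) powr q * H powr q"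
    unfolding Bv_def H_def[symmetric] using H0 powr_mult[of "1/pi\<^sup>2" H q] by simp
  then have "ennreal (Bv f M N powr q) = ennreal ((1/pi\<^sup>2) powr q) * ennreal (H powr q)"
    by (simp add: ennreal_mult)
  also have "\<dots> \<le> ennreal ((1/pi\<^sup>2) powr q) * (A * ennreal (W powr (q - 1)))"
    by (intro mult_left_mono hol) auto
  also have "\<dots> \<le> ennreal ((1/pi\<^sup>2) powr q) * (A * ennreal (Kb b powr (q-1) * (real M * real N) powr ((b-1)*(q-1))))"
    by (intro mult_left_mono ennreal_leI Wq) auto
  also have "\<dots> = ennreal ((1/pi\<^sup>2) powr q * Kb b powr (q-1)) * (A * ennreal ((real M * real N) powr ((b-1)*(q-1))))"
    by (simp add: ennreal_mult mult_ac)
  finally show ?thesis unfolding A_def U_def V_def .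
qed

lemma wnorm_q_fsq: "wnorm_q p q f = (\<integral>\<^sup>+z. ennreal (\<bar>fst z * snd z\<bar> powr (q/p - 1) * \<bar>fsq f z\<bar> powr q) \<partial>lebesgue)"
  unfolding wnorm_q_def by (intro nn_integral_cong) (auto simp: fsq_def indicator_def)

lemma pt_identity:
  assumes z: "fst z \<noteq> 0" "snd z \<noteq> 0" and e: "e = b*(q-1) - q/p"
  shows "(\<bar>fsq f z\<bar> * \<bar>fst z * snd z\<bar> powr b) powr q *
        (indicator sq z * (\<bar>fst z * snd z\<bar> powr (-b) * (phi M (fst z) * phi N (snd z)))) * (real M * real N) powr e
   = (\<bar>fst z * snd z\<bar> powr (q/p - 1) * \<bar>fsq f z\<bar> powr q * (\<bar>fst z\<bar> powr (e+1) * \<bar>snd z\<bar> powr (e+1)))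
     * ((real M * real N) powr e * (phi M (fst z) * phi N (snd z)))"
proof -
  define t where "t = \<bar>fst z * snd z\<bar>"
  have t0: "0 < t" unfolding t_def using z by simp
  have ind: "indicator sq z * \<bar>fsq f z\<bar> powr q = \<bar>fsq f z\<bar> powr q" unfolding fsq_def by (simp add: indicator_def)
  have ex: "b * q + - b = (q/p - 1) + (e + 1)" using e by (simp add: algebra_simps)
  have "t powr (b * q) * t powr (-b) = t powr (q/p - 1) * t powr (e + 1)"
    using t0 by (simp only: ex flip: powr_add)
  also have "t powr (e + 1) = \<bar>fst z\<bar> powr (e+1) * \<bar>snd z\<bar> powr (e+1)"
    unfolding t_def by (simp add: abs_mult powr_mult)
  finally have key: "t powr (b * q) * t powr (-b) = t powr (q/p - 1) * (\<bar>fst z\<bar> powr (e+1) * \<bar>snd z\<bar> powr (e+1))" .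
  have "(\<bar>fsq f z\<bar> * t powr b) powr q = \<bar>fsq f z\<bar> powr q * t powr (b * q)"
    using t0 by (simp add: powr_mult powr_powr)
  then show ?thesis
    unfolding t_def[symmetric]
    using key ind by (simp add: mult_ac) (metis (no_types, lifting) mult.assoc mult.left_commute)
qed

lemma q_part:
  assumes f: "set_integrable lebesgue sq f" and p: "1 < p" and q: "1 \<le> q" and b: "0 < b" "b < 1"
    and e: "e = b*(q-1) - q/p" "-1 < e" "e < 0"
  shows "(\<Sum>m. \<Sum>n. enn_powr (maxavg f i j (Suc m) (Suc n)) q *
            ennreal ((real (Suc m) * real (Suc n)) powr (q / (p/(p-1)) - 1)))
     \<le> ennreal ((1/pi\<^sup>2) powr q * Kb b powr (q-1) * (enn2real (Jc e))\<^sup>2) * wnorm_q p q f"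
proof -
  define c0 where "c0 = (1/pi\<^sup>2) powr q * Kb b powr (q-1)"
  define j2 where "j2 = (enn2real (Jc e))\<^sup>2"
  define G where "G M N z = ennreal ((\<bar>fsq f z\<bar> * \<bar>fst z * snd z\<bar> powr b) powr q *
        (indicator sq z * (\<bar>fst z * snd z\<bar> powr (-b) * (phi M (fst z) * phi N (snd z))))) *
        ennreal ((real M * real N) powr e)" for M N z
  have Gm: "G M N \<in> borel_measurable lebesgue" for M N
    unfolding G_def using fsq_meas[OF f] pmeas[of b] wmeas[of "-b" M N] by measurable
  have c00: "0 \<le> c0" unfolding c0_def by simp
  have ex: "(b-1)*(q-1) + (q / (p/(p-1)) - 1) = e"
    using p e(1) by (simp add: field_simps)
  have trm: "enn_powr (maxavg f i j (Suc m) (Suc n)) q * ennreal ((real (Suc m) * real (Suc n)) powr (q / (p/(p-1)) - 1))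
      \<le> ennreal c0 * (\<integral>\<^sup>+z. G (Suc m) (Suc n) z \<partial>lebesgue)" for m n
  proof -
    define M where "M = Suc m"
    define N where "N = Suc n"
    have MN: "1 \<le> M" "1 \<le> N" unfolding M_def N_def by auto
    define A where "A = (\<integral>\<^sup>+z. ennreal ((\<bar>fsq f z\<bar> * \<bar>fst z * snd z\<bar> powr b) powr q *
        (indicator sq z * (\<bar>fst z * snd z\<bar> powr (-b) * (phi M (fst z) * phi N (snd z))))) \<partial>lebesgue)"
    have "enn_powr (maxavg f i j M N) q \<le> ennreal (Bv f M N powr q)"
      using q by (intro enn_powr_le maxavg_le[OF f MN] Bv_nonneg) auto
    also have "\<dots> \<le> ennreal c0 * (A * ennreal ((real M * real N) powr ((b-1)*(q-1))))"
      unfolding c0_def A_def by (rule term_bound[OF f q b MN])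
    finally have "enn_powr (maxavg f i j M N) q * ennreal ((real M * real N) powr (q / (p/(p-1)) - 1))
       \<le> ennreal c0 * (A * ennreal ((real M * real N) powr ((b-1)*(q-1)))) * ennreal ((real M * real N) powr (q / (p/(p-1)) - 1))"
      by (rule mult_right_mono) simp
    also have "\<dots> = ennreal c0 * (A * ennreal ((real M * real N) powr e))"
    proof -
      have "(real M * real N) powr ((b-1)*(q-1)) * (real M * real N) powr (q / (p/(p-1)) - 1) = (real M * real N) powr e"
        using MN by (simp only: ex flip: powr_add)
      then show ?thesis by (simp add: ennreal_mult'[symmetric] mult.assoc)
    qed
    also have "A * ennreal ((real M * real N) powr e) = (\<integral>\<^sup>+z. G M N z \<partial>lebesgue)"
      unfolding A_def G_def by (rule nn_integral_multc[symmetric]) (use fsq_meas[OF f] pmeas[of b] wmeas[of "-b" M N] in measurable)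
    finally show ?thesis unfolding M_def N_def .
  qed
  have intb: "(\<integral>\<^sup>+z. (\<Sum>m. \<Sum>n. G (Suc m) (Suc n) z) \<partial>lebesgue)
      \<le> (\<integral>\<^sup>+z. ennreal (j2 * (\<bar>fst z * snd z\<bar> powr (q/p - 1) * \<bar>fsq f z\<bar> powr q)) \<partial>lebesgue)"
  proof (rule nn_integral_mono_AE)
    show "AE z in lebesgue. (\<Sum>m. \<Sum>n. G (Suc m) (Suc n) z) \<le> ennreal (j2 * (\<bar>fst z * snd z\<bar> powr (q/p - 1) * \<bar>fsq f z\<bar> powr q))"
      using AE_axes
    proof eventually_elim
      fix z :: "real \<times> real" assume z: "fst z \<noteq> 0 \<and> snd z \<noteq> 0"
      define w where "w = \<bar>fst z * snd z\<bar> powr (q/p - 1) * \<bar>fsq f z\<bar> powr q * (\<bar>fst z\<bar> powr (e+1) * \<bar>snd z\<bar> powr (e+1))"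
      have w0: "0 \<le> w" unfolding w_def by simp
      have "G (Suc m) (Suc n) z = ennreal w * ennreal ((real (Suc m) * real (Suc n)) powr e * (phi (Suc m) (fst z) * phi (Suc n) (snd z)))" for m n
      proof -
        have "G (Suc m) (Suc n) z = ennreal ((\<bar>fsq f z\<bar> * \<bar>fst z * snd z\<bar> powr b) powr q *
          (indicator sq z * (\<bar>fst z * snd z\<bar> powr (-b) * (phi (Suc m) (fst z) * phi (Suc n) (snd z)))) * (real (Suc m) * real (Suc n)) powr e)"
          unfolding G_def using phi_le1 by (subst ennreal_mult'') auto
        also have "\<dots> = ennreal (w * ((real (Suc m) * real (Suc n)) powr e * (phi (Suc m) (fst z) * phi (Suc n) (snd z))))"
          unfolding w_def using z e(1) by (subst pt_identity) auto
        finally show ?thesis using w0 by (simp add: ennreal_mult')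
      qed
      then have "(\<Sum>m. \<Sum>n. G (Suc m) (Suc n) z) = ennreal w * (\<Sum>m. \<Sum>n. ennreal ((real (Suc m) * real (Suc n)) powr e * (phi (Suc m) (fst z) * phi (Suc n) (snd z))))"
        by (simp add: ennreal_suminf_cmult)
      also have "\<dots> \<le> ennreal w * ennreal (j2 * (\<bar>fst z\<bar> powr (-e-1) * \<bar>snd z\<bar> powr (-e-1)))"
        unfolding j2_def using z e by (intro mult_left_mono S_bound) auto
      also have "\<dots> = ennreal (j2 * (\<bar>fst z * snd z\<bar> powr (q/p - 1) * \<bar>fsq f z\<bar> powr q))"
      proof -
        have "\<bar>fst z\<bar> powr (e+1) * \<bar>fst z\<bar> powr (-e-1) = 1" "\<bar>snd z\<bar> powr (e+1) * \<bar>snd z\<bar> powr (-e-1) = 1"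
          using z by (simp_all flip: powr_add)
        then have "w * (j2 * (\<bar>fst z\<bar> powr (-e-1) * \<bar>snd z\<bar> powr (-e-1))) = j2 * (\<bar>fst z * snd z\<bar> powr (q/p - 1) * \<bar>fsq f z\<bar> powr q)"
          unfolding w_def by (simp add: mult_ac) (metis (no_types, lifting) mult.assoc mult.left_commute mult_1_right)
        then show ?thesis using w0 unfolding j2_def by (simp add: ennreal_mult[symmetric])
      qed
      finally show "(\<Sum>m. \<Sum>n. G (Suc m) (Suc n) z) \<le> ennreal (j2 * (\<bar>fst z * snd z\<bar> powr (q/p - 1) * \<bar>fsq f z\<bar> powr q))" .
    qed
  qed
  have inte: "(\<integral>\<^sup>+z. ennreal (j2 * (\<bar>fst z * snd z\<bar> powr (q/p - 1) * \<bar>fsq f z\<bar> powr q)) \<partial>lebesgue) = ennreal j2 * wnorm_q p q f"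
  proof -
    have wm: "(\<lambda>z. ennreal (\<bar>fst z * snd z\<bar> powr (q/p - 1) * \<bar>fsq f z\<bar> powr q)) \<in> borel_measurable lebesgue"
      using fsq_meas[OF f] pmeas[of "q/p-1"] by measurable
    show ?thesis unfolding wnorm_q_fsq unfolding j2_def
      by (subst nn_integral_cmult[symmetric]) (use wm in \<open>auto simp: ennreal_mult\<close>)
  qed
  have "(\<Sum>m. \<Sum>n. enn_powr (maxavg f i j (Suc m) (Suc n)) q *
            ennreal ((real (Suc m) * real (Suc n)) powr (q / (p/(p-1)) - 1)))
      \<le> (\<Sum>m. \<Sum>n. ennreal c0 * (\<integral>\<^sup>+z. G (Suc m) (Suc n) z \<partial>lebesgue))"
    by (intro suminf_le trm) auto
  also have "\<dots> = ennreal c0 * (\<integral>\<^sup>+z. (\<Sum>m. \<Sum>n. G (Suc m) (Suc n) z) \<partial>lebesgue)"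
  proof -
    have "(\<Sum>n. (\<integral>\<^sup>+z. G (Suc m) (Suc n) z \<partial>lebesgue)) = (\<integral>\<^sup>+z. (\<Sum>n. G (Suc m) (Suc n) z) \<partial>lebesgue)" for m
      by (rule nn_integral_suminf[symmetric]) (rule Gm)
    moreover have "(\<Sum>m. (\<integral>\<^sup>+z. (\<Sum>n. G (Suc m) (Suc n) z) \<partial>lebesgue)) = (\<integral>\<^sup>+z. (\<Sum>m. \<Sum>n. G (Suc m) (Suc n) z) \<partial>lebesgue)"
      by (rule nn_integral_suminf[symmetric]) (use Gm in measurable)
    ultimately show ?thesis by (simp add: ennreal_suminf_cmult)
  qed
  also have "\<dots> \<le> ennreal c0 * (ennreal j2 * wnorm_q p q f)"
    using intb inte by (intro mult_left_mono) auto
  finally show ?thesis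
    unfolding c0_def j2_def by (simp add: ennreal_mult mult_ac)
qed


lemma sq_leb: "sq \<in> sets lebesgue"
proof -
  have "sq \<in> sets (borel :: (real \<times> real) measure)" using sq_sets by (simp only: borel_prod)
  then show ?thesis by (metis sets_completionI_sets sets_lborel)
qed

lemma inf_part:
  assumes f: "set_integrable lebesgue sq f" and p: "1 < p"
  shows "(SUP (m, n) \<in> {(m, n). 1 \<le> m \<and> 1 \<le> n}.
            ennreal ((real m * real n) powr (1 / (p/(p-1)))) * maxavg f i j m n)
     \<le> ennreal ((Kb (1/p) + 1) / pi\<^sup>2) * wnorm_inf p f"
proof (cases "wnorm_inf p f = \<infinity>")
  case True
  have "0 < (Kb (1/p) + 1) / pi\<^sup>2" using Kb_nonneg[of "1/p"] by (simp add: add_nonneg_pos)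
  then have "ennreal ((Kb (1/p) + 1) / pi\<^sup>2) * wnorm_inf p f = \<infinity>"
    using True Kb_nonneg[of "1/p"] by (simp add: ennreal_mult_top)
  then show ?thesis by simp
next
  case False
  then obtain Mv where Mv: "wnorm_inf p f = ennreal Mv" "0 \<le> Mv" by (cases "wnorm_inf p f") auto
  have AEb: "AE z in lebesgue. \<bar>fsq f z\<bar> * (phi m (fst z) * phi n (snd z))
      \<le> Mv * (indicator sq z * (\<bar>fst z * snd z\<bar> powr (-(1/p)) * (phi m (fst z) * phi n (snd z))))" for m n
  proof -
    have "AE z in restrict_space lebesgue sq. ennreal (\<bar>fst z * snd z\<bar> powr (1 / p) * \<bar>f z\<bar>) \<le> wnorm_inf p f"
      unfolding wnorm_inf_def by (rule esssup_AE)
    then have "AE z in lebesgue. z \<in> sq \<longrightarrow> ennreal (\<bar>fst z * snd z\<bar> powr (1 / p) * \<bar>f z\<bar>) \<le> ennreal Mv"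
      using sq_leb by (subst (asm) AE_restrict_space_iff) (auto simp: Mv)
    then show ?thesis using AE_axes
    proof eventually_elim
      fix z :: "real \<times> real"
      assume a: "z \<in> sq \<longrightarrow> ennreal (\<bar>fst z * snd z\<bar> powr (1 / p) * \<bar>f z\<bar>) \<le> ennreal Mv"
        and z: "fst z \<noteq> 0 \<and> snd z \<noteq> 0"
      show "\<bar>fsq f z\<bar> * (phi m (fst z) * phi n (snd z))
          \<le> Mv * (indicator sq z * (\<bar>fst z * snd z\<bar> powr (-(1/p)) * (phi m (fst z) * phi n (snd z))))"
      proof (cases "z \<in> sq")
        case True
        define t where "t = \<bar>fst z * snd z\<bar>"
        have t0: "0 < t" unfolding t_def using z by simp
        have "t powr (1/p) * \<bar>f z\<bar> \<le> Mv" using a True Mv(2) unfolding t_def by (simp add: ennreal_le_iff)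
        then have "\<bar>f z\<bar> \<le> Mv * t powr (-(1/p))"
          using t0 by (simp add: powr_minus field_simps)
        then have "\<bar>f z\<bar> * (phi m (fst z) * phi n (snd z)) \<le> Mv * t powr (-(1/p)) * (phi m (fst z) * phi n (snd z))"
          using phi_le1 by (intro mult_right_mono) (auto intro: mult_nonneg_nonneg)
        then show ?thesis using True unfolding fsq_def t_def by (simp add: mult_ac)
      next
        case False
        then show ?thesis unfolding fsq_def using phi_le1 Mv(2) by simp
      qed
    qed
  qed
  show ?thesis
  proof (rule SUP_least, clarify)
    fix m n :: nat assume mn: "1 \<le> m" "1 \<le> n"
    define V where "V z = indicator sq z * (\<bar>fst z * snd z\<bar> powr (-(1/p)) * (phi m (fst z) * phi n (snd z)))" for z
    have b: "0 < 1/p" "1/p < 1" using p by auto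
    have "ennreal (pi\<^sup>2 * Bv f m n) = (\<integral>\<^sup>+z. ennreal (\<bar>fsq f z\<bar> * (phi m (fst z) * phi n (snd z))) \<partial>lebesgue)"
      unfolding Bv_def using Bv_integrable[OF f] phi_le1
      by (subst nn_integral_eq_integral) (auto intro!: mult_nonneg_nonneg)
    also have "\<dots> \<le> (\<integral>\<^sup>+z. ennreal Mv * ennreal (V z) \<partial>lebesgue)"
    proof (rule nn_integral_mono_AE)
      show "AE z in lebesgue. ennreal (\<bar>fsq f z\<bar> * (phi m (fst z) * phi n (snd z))) \<le> ennreal Mv * ennreal (V z)"
        using AEb[of m n]
      proof eventually_elim
        fix z assume "\<bar>fsq f z\<bar> * (phi m (fst z) * phi n (snd z)) \<le> Mv * (indicator sq z * (\<bar>fst z * snd z\<bar> powr (-(1/p)) * (phi m (fst z) * phi n (snd z))))"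
        then have "ennreal (\<bar>fsq f z\<bar> * (phi m (fst z) * phi n (snd z))) \<le> ennreal (Mv * V z)"
          unfolding V_def by (rule ennreal_leI)
        then show "ennreal (\<bar>fsq f z\<bar> * (phi m (fst z) * phi n (snd z))) \<le> ennreal Mv * ennreal (V z)"
          using Mv(2) by (simp add: ennreal_mult')
      qed
    qed
    also have "\<dots> = ennreal Mv * (\<integral>\<^sup>+z. ennreal (V z) \<partial>lebesgue)"
      unfolding V_def by (rule nn_integral_cmult) (use wmeas in measurable)
    also have "\<dots> \<le> ennreal Mv * ennreal (Kb (1/p) * (real m * real n) powr (1/p - 1))"
      unfolding V_def using W_bound[OF b mn] by (intro mult_left_mono) auto
    finally have B1: "pi\<^sup>2 * Bv f m n \<le> Mv * (Kb (1/p) * (real m * real n) powr (1/p - 1))"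
      using Mv(2) Kb_nonneg by (simp add: ennreal_mult[symmetric] ennreal_le_iff)
    define r where "r = (real m * real n) powr (1 / (p/(p-1)))"
    have r0: "0 \<le> r" unfolding r_def by simp
    have rr: "r * (real m * real n) powr (1/p - 1) = 1"
    proof -
      have "1 / (p/(p-1)) + (1/p - 1) = 0" using p by (simp add: field_simps)
      then show ?thesis unfolding r_def using mn by (simp flip: powr_add)
    qed
    have "r * Bv f m n \<le> r * (Mv * (Kb (1/p) * (real m * real n) powr (1/p - 1))) / pi\<^sup>2"
    proof -
      have "r * (pi\<^sup>2 * Bv f m n) \<le> r * (Mv * (Kb (1/p) * (real m * real n) powr (1/p - 1)))"
        using B1 r0 by (rule mult_left_mono)
      then show ?thesis by (simp add: field_simps)
    qed
    also have "\<dots> = Mv * Kb (1/p) / pi\<^sup>2" using rr by (simp add: mult_ac)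
    also have "\<dots> \<le> (Kb (1/p) + 1) / pi\<^sup>2 * Mv" using Mv(2) by (simp add: field_simps mult_left_mono)
    finally have rB: "r * Bv f m n \<le> (Kb (1/p) + 1) / pi\<^sup>2 * Mv" .
    have "ennreal r * maxavg f i j m n \<le> ennreal r * ennreal (Bv f m n)"
      by (intro mult_left_mono maxavg_le[OF f mn]) auto
    also have "\<dots> \<le> ennreal ((Kb (1/p) + 1) / pi\<^sup>2) * wnorm_inf p f"
      unfolding Mv using rB r0 Mv(2) Kb_nonneg[of "1/p"]
      by (simp add: ennreal_mult[symmetric] ennreal_leI Bv_nonneg)
    finally show "ennreal ((real m * real n) powr (1 / (p/(p-1)))) * maxavg f i j m n
        \<le> ennreal ((Kb (1/p) + 1) / pi\<^sup>2) * wnorm_inf p f" unfolding r_def .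
  qed
qed


lemma choose_b:
  fixes p q :: real
  assumes p: "1 < p" and q: "1 \<le> q"
  obtains b where "0 < b" "b < 1" "-1 < b*(q-1) - q/p" "b*(q-1) - q/p < 0"
proof (cases "q = 1")
  case True
  show ?thesis by (rule that[of "1/2"]) (use True p in auto)
next
  case False
  then have q1: "1 < q" using q by simp
  define lo where "lo = max 0 (q/p - 1)"
  define hi where "hi = min (q/p) (q - 1)"
  have qp: "q/p < q" using p q1 by (simp add: divide_less_eq)
  have qp0: "0 < q/p" using p q1 by simp
  have "lo < hi" unfolding lo_def hi_def using qp qp0 q1 by auto
  define \<beta> where "\<beta> = (lo + hi) / 2"
  have "lo < \<beta>" "\<beta> < hi" unfolding \<beta>_def using \<open>lo < hi\<close> by auto
  then have b1: "0 < \<beta>" "q/p - 1 < \<beta>" "\<beta> < q/p" "\<beta> < q - 1" unfolding lo_def hi_def by auto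
  show ?thesis
  proof (rule that[of "\<beta> / (q - 1)"])
    show "0 < \<beta> / (q - 1)" using b1 q1 by simp
    show "\<beta> / (q - 1) < 1" using b1 q1 by simp
    have "\<beta> / (q - 1) * (q - 1) = \<beta>" using q1 by simp
    then show "-1 < \<beta> / (q - 1) * (q - 1) - q/p" "\<beta> / (q - 1) * (q - 1) - q/p < 0" using b1 by auto
  qed
qed

lemma sum01_le:
  fixes X :: "nat \<Rightarrow> nat \<Rightarrow> ennreal"
  assumes "\<And>i j. X i j \<le> c * w"
  shows "(\<Sum>i\<in>{0::nat,1}. \<Sum>j\<in>{0::nat,1}. X i j) \<le> ennreal 4 * c * w"
proof -
  have "(\<Sum>i\<in>{0::nat,1}. \<Sum>j\<in>{0::nat,1}. X i j) \<le> (\<Sum>i\<in>{0::nat,1}. \<Sum>j\<in>{0::nat,1}. c * w)"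
    by (intro sum_mono assms)
  also have "\<dots> = ennreal 4 * c * w"
    by (simp add: algebra_simps)
  finally show ?thesis .
qed

theorem lemma3:
  fixes p :: real
  assumes "1 < p"
  defines "p' \<equiv> p / (p - 1)"
  shows "(\<forall>q::real. 1 \<le> q \<longrightarrow>
           (\<exists>C::real. 0 < C \<and> (\<forall>f :: (real \<times> real) \<Rightarrow> real. set_integrable lebesgue sq f \<longrightarrow>
              (\<Sum>i\<in>{0::nat,1}. \<Sum>j\<in>{0::nat,1}. \<Sum>m. \<Sum>n.
                  enn_powr (maxavg f i j (Suc m) (Suc n)) q *
                  ennreal ((real (Suc m) * real (Suc n)) powr (q / p' - 1)))
              \<le> ennreal C * wnorm_q p q f)))
       \<and> (\<exists>C::real. 0 < C \<and> (\<forall>f :: (real \<times> real) \<Rightarrow> real. set_integrable lebesgue sq f \<longrightarrow>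
              (\<Sum>i\<in>{0::nat,1}. \<Sum>j\<in>{0::nat,1}.
                  (SUP (m, n) \<in> {(m, n). 1 \<le> m \<and> 1 \<le> n}.
                    ennreal ((real m * real n) powr (1 / p')) * maxavg f i j m n))
              \<le> ennreal C * wnorm_inf p f))"
proof (intro conjI allI impI)
  fix q :: real assume q: "1 \<le> q"
  obtain b where b: "0 < b" "b < 1" "-1 < b*(q-1) - q/p" "b*(q-1) - q/p < 0"
    using choose_b[OF assms(1) q] by blast
  define e where "e = b*(q-1) - q/p"
  define c where "c = (1/pi\<^sup>2) powr q * Kb b powr (q-1) * (enn2real (Jc e))\<^sup>2"
  have c0: "0 \<le> c" unfolding c_def by simp
  show "\<exists>C::real. 0 < C \<and> (\<forall>f :: (real \<times> real) \<Rightarrow> real. set_integrable lebesgue sq f \<longrightarrow>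
              (\<Sum>i\<in>{0::nat,1}. \<Sum>j\<in>{0::nat,1}. \<Sum>m. \<Sum>n.
                  enn_powr (maxavg f i j (Suc m) (Suc n)) q *
                  ennreal ((real (Suc m) * real (Suc n)) powr (q / p' - 1)))
              \<le> ennreal C * wnorm_q p q f)"
  proof (intro exI conjI allI impI)
    show "0 < 4 * (c + 1)" using c0 by simp
    fix f :: "(real \<times> real) \<Rightarrow> real" assume f: "set_integrable lebesgue sq f"
    have "(\<Sum>i\<in>{0::nat,1}. \<Sum>j\<in>{0::nat,1}. \<Sum>m. \<Sum>n.
                  enn_powr (maxavg f i j (Suc m) (Suc n)) q *
                  ennreal ((real (Suc m) * real (Suc n)) powr (q / p' - 1)))
         \<le> ennreal 4 * ennreal (c + 1) * wnorm_q p q f"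
    proof (rule sum01_le)
      fix i j :: nat
      have "(\<Sum>m. \<Sum>n. enn_powr (maxavg f i j (Suc m) (Suc n)) q *
                  ennreal ((real (Suc m) * real (Suc n)) powr (q / p' - 1))) \<le> ennreal c * wnorm_q p q f"
        unfolding p'_def c_def using b e_def by (intro q_part[OF f assms(1) q b(1,2)]) auto
      also have "\<dots> \<le> ennreal (c + 1) * wnorm_q p q f"
        by (intro mult_right_mono ennreal_leI) auto
      finally show "(\<Sum>m. \<Sum>n. enn_powr (maxavg f i j (Suc m) (Suc n)) q *
                  ennreal ((real (Suc m) * real (Suc n)) powr (q / p' - 1))) \<le> ennreal (c + 1) * wnorm_q p q f" .
    qed
    then show "(\<Sum>i\<in>{0::nat,1}. \<Sum>j\<in>{0::nat,1}. \<Sum>m. \<Sum>n.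
                  enn_powr (maxavg f i j (Suc m) (Suc n)) q *
                  ennreal ((real (Suc m) * real (Suc n)) powr (q / p' - 1)))
         \<le> ennreal (4 * (c + 1)) * wnorm_q p q f"
      using c0 by (simp add: ennreal_mult)
  qed
next
  define c where "c = (Kb (1/p) + 1) / pi\<^sup>2"
  have c0: "0 < c" unfolding c_def using Kb_nonneg[of "1/p"] by (simp add: add_nonneg_pos)
  show "\<exists>C::real. 0 < C \<and> (\<forall>f :: (real \<times> real) \<Rightarrow> real. set_integrable lebesgue sq f \<longrightarrow>
              (\<Sum>i\<in>{0::nat,1}. \<Sum>j\<in>{0::nat,1}.
                  (SUP (m, n) \<in> {(m, n). 1 \<le> m \<and> 1 \<le> n}.
                    ennreal ((real m * real n) powr (1 / p')) * maxavg f i j m n))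
              \<le> ennreal C * wnorm_inf p f)"
  proof (intro exI conjI allI impI)
    show "0 < 4 * c" using c0 by simp
    fix f :: "(real \<times> real) \<Rightarrow> real" assume f: "set_integrable lebesgue sq f"
    have "(\<Sum>i\<in>{0::nat,1}. \<Sum>j\<in>{0::nat,1}.
                  (SUP (m, n) \<in> {(m, n). 1 \<le> m \<and> 1 \<le> n}.
                    ennreal ((real m * real n) powr (1 / p')) * maxavg f i j m n))
         \<le> ennreal 4 * ennreal c * wnorm_inf p f"
      unfolding p'_def c_def by (rule sum01_le) (rule inf_part[OF f assms(1)])
    then show "(\<Sum>i\<in>{0::nat,1}. \<Sum>j\<in>{0::nat,1}.
                  (SUP (m, n) \<in> {(m, n). 1 \<le> m \<and> 1 \<le> n}.
                    ennreal ((real m * real n) powr (1 / p')) * maxavg f i j m n))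
         \<le> ennreal (4 * c) * wnorm_inf p f"
      using c0 by (simp add: ennreal_mult)
  qed
qed


end
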